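(* Let $f=f(x_1,\ldots,x_n)$ be a positive non-canalyzing Boolean function such that for every $i\in[n]$ both restrictions $f_{|x_i=0}$ and $f_{|x_i=1}$ are canalyzing. Then either there exists a minimal one $\mathbf{y}$ of $f$ of Hamming weight $2$ such that $\overline{\mathbf{y}}$ is a maximal zero of $f$, or $n=4$ and $f$ has exactly $6$ extremal points.
   Context: $B=\{0,1\}$, $\preceq$ coordinatewise order on $B^n$; $\overline{\mathbf{x}}$ denotes the complementary point ($(\overline{\mathbf{x}})_i=1$ iff $(\mathbf{x})_i=0$). $f$ is positive if $f(\mathbf{x})=1$ and $\mathbf{x}\preceq\mathbf{y}$ imply $f(\mathbf{y})=1$. Maximal zeros / minimal ones are $\preceq$-maximal false / $\preceq$-minimal true points; extremal points are both kinds together. $f_{|x_i=\alpha}$ is obtained by fixing $x_i=\alpha$. $f$ is canalyzing if for some $i$, $f_{|x_i=0}$ or $f_{|x_i=1}$ is constant. *)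

theory Defs
  imports Main
begin

text \<open>A Boolean function on a finite set V of variable indices is modelled as
  f :: (nat \<Rightarrow> bool) \<Rightarrow> bool, evaluated only on the points of B^V, i.e.
  assignments that are False outside V.\<close>

definition points :: "nat set \<Rightarrow> (nat \<Rightarrow> bool) set" where
  "points V = {x. \<forall>j. j \<notin> V \<longrightarrow> \<not> x j}"

definition positive_on :: "nat set \<Rightarrow> ((nat \<Rightarrow> bool) \<Rightarrow> bool) \<Rightarrow> bool" where
  "positive_on V f \<longleftrightarrow> (\<forall>x\<in>points V. \<forall>y\<in>points V. f x \<and> x \<le> y \<longrightarrow> f y)"

definition restr :: "((nat \<Rightarrow> bool) \<Rightarrow> bool) \<Rightarrow> nat \<Rightarrow> bool \<Rightarrow> ((nat \<Rightarrow> bool) \<Rightarrow> bool)" where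
  "restr f i a = (\<lambda>x. f (x(i := a)))"

definition constant_on :: "nat set \<Rightarrow> ((nat \<Rightarrow> bool) \<Rightarrow> bool) \<Rightarrow> bool" where
  "constant_on V g \<longleftrightarrow> (\<exists>c. \<forall>x\<in>points V. g x = c)"

definition canalyzing :: "nat set \<Rightarrow> ((nat \<Rightarrow> bool) \<Rightarrow> bool) \<Rightarrow> bool" where
  "canalyzing V f \<longleftrightarrow>
     (\<exists>i\<in>V. constant_on (V - {i}) (restr f i False) \<or> constant_on (V - {i}) (restr f i True))"

definition min_one :: "nat set \<Rightarrow> ((nat \<Rightarrow> bool) \<Rightarrow> bool) \<Rightarrow> (nat \<Rightarrow> bool) \<Rightarrow> bool" where
  "min_one V f x \<longleftrightarrow> x \<in> points V \<and> f x \<and> (\<forall>y\<in>points V. f y \<and> y \<le> x \<longrightarrow> y = x)"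

definition max_zero :: "nat set \<Rightarrow> ((nat \<Rightarrow> bool) \<Rightarrow> bool) \<Rightarrow> (nat \<Rightarrow> bool) \<Rightarrow> bool" where
  "max_zero V f x \<longleftrightarrow> x \<in> points V \<and> \<not> f x \<and> (\<forall>y\<in>points V. \<not> f y \<and> x \<le> y \<longrightarrow> y = x)"

definition extremal_points :: "nat set \<Rightarrow> ((nat \<Rightarrow> bool) \<Rightarrow> bool) \<Rightarrow> (nat \<Rightarrow> bool) set" where
  "extremal_points V f = {x. min_one V f x \<or> max_zero V f x}"

definition hweight :: "nat set \<Rightarrow> (nat \<Rightarrow> bool) \<Rightarrow> nat" where
  "hweight V x = card {j\<in>V. x j}"

definition complement :: "nat set \<Rightarrow> (nat \<Rightarrow> bool) \<Rightarrow> (nat \<Rightarrow> bool)" where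
  "complement V x = (\<lambda>j. j \<in> V \<and> \<not> x j)"

end

theory Submission
  imports Defs
begin

definition ee :: "nat \<Rightarrow> nat \<Rightarrow> bool" where "ee i = (\<lambda>k. k = i)"
definition pp :: "nat \<Rightarrow> nat \<Rightarrow> nat \<Rightarrow> bool" where "pp i j = (\<lambda>k. k = i \<or> k = j)"
definition ce :: "nat \<Rightarrow> nat \<Rightarrow> nat \<Rightarrow> bool" where "ce n i = (\<lambda>k. k < n \<and> k \<noteq> i)"
definition cp :: "nat \<Rightarrow> nat \<Rightarrow> nat \<Rightarrow> nat \<Rightarrow> bool" where "cp n i j = (\<lambda>k. k < n \<and> k \<noteq> i \<and> k \<noteq> j)"

lemma points_iff: "x \<in> points V \<longleftrightarrow> (\<forall>j. x j \<longrightarrow> j \<in> V)"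
  by (auto simp: points_def)

lemma posD: "positive_on V f \<Longrightarrow> x \<in> points V \<Longrightarrow> y \<in> points V \<Longrightarrow> x \<le> y \<Longrightarrow> f x \<Longrightarrow> f y"
  unfolding positive_on_def by blast

lemma pp_sym: "pp a b = pp b a" unfolding pp_def by (rule ext) blast
lemma cp_sym: "cp n a b = cp n b a" unfolding cp_def by (rule ext) blast

lemma basic_facts:
  assumes n: "n \<ge> 1" and pos: "positive_on {..<n} f"
    and nc: "\<not> canalyzing {..<n} f"
  shows "\<forall>i<n. \<not> f (ee i)" and "\<forall>i<n. f (ce n i)" and "\<not> f (\<lambda>_. False)" and "f (\<lambda>k. k < n)"
proof -
  show fe: "\<forall>i<n. \<not> f (ee i)"
  proof (intro allI impI notI)
    fix i assume i: "i < n" and fi: "f (ee i)"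
    have "constant_on ({..<n} - {i}) (restr f i True)"
      unfolding constant_on_def restr_def
    proof (rule exI[of _ True], intro ballI)
      fix x assume "x \<in> points ({..<n} - {i})"
      hence a: "x(i := True) \<in> points {..<n}" using i by (auto simp: points_iff)
      have b: "ee i \<le> x(i := True)" by (auto simp: ee_def le_fun_def)
      have c: "ee i \<in> points {..<n}" using i by (auto simp: points_iff ee_def)
      show "f (x(i := True)) = True" using posD[OF pos c a b fi] by (rule eqTrueI)
    qed
    thus False using nc i unfolding canalyzing_def by blast
  qed
  show fce: "\<forall>i<n. f (ce n i)"
  proof (intro allI impI, rule ccontr)
    fix i assume i: "i < n" and fi: "\<not> f (ce n i)"
    have "constant_on ({..<n} - {i}) (restr f i False)"
      unfolding constant_on_def restr_def
    proof (rule exI[of _ False], intro ballI)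
      fix x assume "x \<in> points ({..<n} - {i})"
      hence a: "x(i := False) \<in> points {..<n}" and b: "x(i := False) \<le> ce n i"
        using i by (auto simp: points_iff ce_def le_fun_def)
      have c: "ce n i \<in> points {..<n}" by (auto simp: points_iff ce_def)
      show "f (x(i := False)) = False" using posD[OF pos a c b] fi by blast
    qed
    thus False using nc i unfolding canalyzing_def by blast
  qed
  show "\<not> f (\<lambda>_. False)"
  proof
    assume d: "f (\<lambda>_. False)"
    have b: "(\<lambda>_. False) \<le> ee 0" by (auto simp: le_fun_def)
    have c: "ee 0 \<in> points {..<n}" using n by (auto simp: points_iff ee_def)
    have a: "(\<lambda>_. False) \<in> points {..<n}" by (simp add: points_iff)
    have "f (ee 0)" using posD[OF pos a c b d] .
    moreover have "(0::nat) < n" using n by simp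
    ultimately show False using fe by blast
  qed
  have "ce n 0 \<le> (\<lambda>k. k < n)" by (auto simp: le_fun_def ce_def)
  moreover have "ce n 0 \<in> points {..<n}" "(\<lambda>k. k < n) \<in> points {..<n}" by (auto simp: points_iff ce_def)
  moreover have "f (ce n 0)" using fce n by (simp add: Suc_le_eq)
  ultimately show "f (\<lambda>k. k < n)" using posD[OF pos, of "ce n 0" "\<lambda>k. k < n"] by simp
qed

lemma factB:
  assumes fe: "\<forall>i<n. \<not> f (ee i)" and fce: "\<forall>i<n. f (ce n i)" and f1: "f (\<lambda>k. k < n)"
    and can: "canalyzing ({..<n} - {i}) (restr f i True)" and i: "i < n"
  shows "\<exists>j<n. j \<noteq> i \<and> f (pp i j)"
proof -
  from can obtain j where jV: "j \<in> {..<n} - {i}"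
    and cc: "constant_on ({..<n} - {i} - {j}) (restr (restr f i True) j False)
       \<or> constant_on ({..<n} - {i} - {j}) (restr (restr f i True) j True)"
    unfolding canalyzing_def by blast
  then obtain b where cb: "constant_on ({..<n} - {i} - {j}) (restr (restr f i True) j b)" by blast
  have j: "j < n" "j \<noteq> i" using jV by auto
  from cb obtain c where c0: "\<forall>x\<in>points ({..<n} - {i} - {j}). restr (restr f i True) j b x = c"
    unfolding constant_on_def by blast
  hence c: "\<forall>x\<in>points ({..<n} - {i} - {j}). f (x(j := b, i := True)) = c"
    unfolding restr_def .
  have p0: "(\<lambda>_. False) \<in> points ({..<n} - {i} - {j})" by (simp add: points_iff)
  have p1: "cp n i j \<in> points ({..<n} - {i} - {j})" by (auto simp: points_iff cp_def)
  have c0': "f ((\<lambda>_. False)(j := b, i := True)) = c" by (rule bspec[OF c p0])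
  have c1': "f ((cp n i j)(j := b, i := True)) = c" by (rule bspec[OF c p1])
  show ?thesis
  proof (cases b)
    case False
    have eq1: "(\<lambda>_. False)(j := b, i := True) = ee i" using j False by (auto simp: ee_def fun_eq_iff)
    have eq2: "(cp n i j)(j := b, i := True) = ce n j" using i j False by (auto simp: ce_def cp_def fun_eq_iff)
    from c0' c1' have e: "f (ee i) = f (ce n j)" unfolding eq1 eq2 by simp
    have "\<not> f (ee i)" "f (ce n j)" using fe fce i j by auto
    with e show ?thesis by blast
  next
    case True
    have eq1: "(\<lambda>_. False)(j := b, i := True) = pp i j" using j True by (auto simp: pp_def fun_eq_iff)
    have eq2: "(cp n i j)(j := b, i := True) = (\<lambda>k. k < n)" using i j True by (auto simp: cp_def fun_eq_iff)
    from c0' c1' have e: "f (pp i j) = f (\<lambda>k. k < n)" unfolding eq1 eq2 by simp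
    have "f (pp i j)" using e f1 by blast
    thus ?thesis using j by blast
  qed
qed

lemma factC:
  assumes fe: "\<forall>i<n. \<not> f (ee i)" and fce: "\<forall>i<n. f (ce n i)" and f0: "\<not> f (\<lambda>_. False)"
    and can: "canalyzing ({..<n} - {i}) (restr f i False)" and i: "i < n"
  shows "\<exists>j<n. j \<noteq> i \<and> \<not> f (cp n i j)"
proof -
  from can obtain j where jV: "j \<in> {..<n} - {i}"
    and cc: "constant_on ({..<n} - {i} - {j}) (restr (restr f i False) j False)
       \<or> constant_on ({..<n} - {i} - {j}) (restr (restr f i False) j True)"
    unfolding canalyzing_def by blast
  then obtain b where cb: "constant_on ({..<n} - {i} - {j}) (restr (restr f i False) j b)" by blast
  have j: "j < n" "j \<noteq> i" using jV by auto
  from cb obtain c where c0: "\<forall>x\<in>points ({..<n} - {i} - {j}). restr (restr f i False) j b x = c"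
    unfolding constant_on_def by blast
  hence c: "\<forall>x\<in>points ({..<n} - {i} - {j}). f (x(j := b, i := False)) = c"
    unfolding restr_def .
  have p0: "(\<lambda>_. False) \<in> points ({..<n} - {i} - {j})" by (simp add: points_iff)
  have p1: "cp n i j \<in> points ({..<n} - {i} - {j})" by (auto simp: points_iff cp_def)
  have c0': "f ((\<lambda>_. False)(j := b, i := False)) = c" by (rule bspec[OF c p0])
  have c1': "f ((cp n i j)(j := b, i := False)) = c" by (rule bspec[OF c p1])
  show ?thesis
  proof (cases b)
    case True
    have eq1: "(\<lambda>_. False)(j := b, i := False) = ee j" using j True by (auto simp: ee_def fun_eq_iff)
    have eq2: "(cp n i j)(j := b, i := False) = ce n i" using i j True by (auto simp: ce_def cp_def fun_eq_iff)
    from c0' c1' have e: "f (ee j) = f (ce n i)" unfolding eq1 eq2 by simp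
    have "\<not> f (ee j)" "f (ce n i)" using fe fce i j by auto
    with e show ?thesis by blast
  next
    case False
    have eq1: "(\<lambda>_. False)(j := b, i := False) = (\<lambda>_. False)" using False by (auto simp: fun_eq_iff)
    have eq2: "(cp n i j)(j := b, i := False) = cp n i j" using i j False by (auto simp: cp_def fun_eq_iff)
    from c0' c1' have e: "f (\<lambda>_. False) = f (cp n i j)" unfolding eq1 eq2 by simp
    have "\<not> f (cp n i j)" using e f0 by blast
    thus ?thesis using j by blast
  qed
qed

lemma factP:
  assumes pos: "positive_on {..<n} f" and "a < n" "b < n" "f (pp a b)" "\<not> f (cp n c d)"
  shows "a = c \<or> a = d \<or> b = c \<or> b = d"
proof (rule ccontr)
  assume h: "\<not> ?thesis"
  have "pp a b \<le> cp n c d" using h assms by (auto simp: pp_def cp_def le_fun_def)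
  moreover have "pp a b \<in> points {..<n}" "cp n c d \<in> points {..<n}" using assms by (auto simp: points_iff pp_def cp_def)
  ultimately show False using posD[OF pos, of "pp a b" "cp n c d"] assms by simp
qed

lemma min_one_pair:
  assumes pos: "positive_on {..<n} f" and fe: "\<forall>i<n. \<not> f (ee i)"
    and ij: "i < n" "j < n" "i \<noteq> j" and fp: "f (pp i j)"
  shows "min_one {..<n} f (pp i j)"
  unfolding min_one_def
proof (intro conjI ballI impI)
  show "pp i j \<in> points {..<n}" using ij by (auto simp: points_iff pp_def)
  show "f (pp i j)" by fact
  fix y assume y: "y \<in> points {..<n}" and fy: "f y \<and> y \<le> pp i j"
  show "y = pp i j"
  proof (rule ccontr)
    assume ne: "y \<noteq> pp i j"
    have le: "\<And>k. y k \<Longrightarrow> k = i \<or> k = j" using fy by (auto simp: le_fun_def pp_def)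
    have "\<not> y i \<or> \<not> y j"
    proof (rule ccontr)
      assume "\<not> (\<not> y i \<or> \<not> y j)"
      hence "y = pp i j" using le by (auto simp: pp_def fun_eq_iff)
      thus False using ne by simp
    qed
    then obtain a where a: "a = i \<or> a = j" "y \<le> ee a"
      using le by (auto simp: le_fun_def ee_def)
    have "ee a \<in> points {..<n}" using a ij by (auto simp: points_iff ee_def)
    hence "f (ee a)" using posD[OF pos y _ a(2)] fy by blast
    thus False using fe a ij by auto
  qed
qed

lemma good_pair:
  assumes pos: "positive_on {..<n} f" and fe: "\<forall>i<n. \<not> f (ee i)" and fce: "\<forall>i<n. f (ce n i)"
    and ij: "i < n" "j < n" "i \<noteq> j" and fp: "f (pp i j)" and fc: "\<not> f (cp n i j)"
  shows "min_one {..<n} f (pp i j) \<and> hweight {..<n} (pp i j) = 2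
              \<and> max_zero {..<n} f (complement {..<n} (pp i j))"
proof (intro conjI)
  show "min_one {..<n} f (pp i j)" using min_one_pair assms by blast
  have "{k\<in>{..<n}. pp i j k} = {i, j}" using ij by (auto simp: pp_def)
  thus "hweight {..<n} (pp i j) = 2" using ij by (simp add: hweight_def)
  have cc: "complement {..<n} (pp i j) = cp n i j" by (auto simp: complement_def pp_def cp_def fun_eq_iff)
  show "max_zero {..<n} f (complement {..<n} (pp i j))"
    unfolding cc max_zero_def
  proof (intro conjI ballI impI)
    show "cp n i j \<in> points {..<n}" by (auto simp: points_iff cp_def)
    show "\<not> f (cp n i j)" by fact
    fix y assume y: "y \<in> points {..<n}" and fy: "\<not> f y \<and> cp n i j \<le> y"
    have yi: "\<not> y i"
    proof
      assume "y i"
      hence "ce n j \<le> y" using fy ij by (auto simp: le_fun_def ce_def cp_def)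
      moreover have "ce n j \<in> points {..<n}" by (auto simp: points_iff ce_def)
      ultimately have "f y" using posD[OF pos _ y] fce ij by blast
      thus False using fy by simp
    qed
    have yj: "\<not> y j"
    proof
      assume "y j"
      hence "ce n i \<le> y" using fy ij by (auto simp: le_fun_def ce_def cp_def)
      moreover have "ce n i \<in> points {..<n}" by (auto simp: points_iff ce_def)
      ultimately have "f y" using posD[OF pos _ y] fce ij by blast
      thus False using fy by simp
    qed
    show "y = cp n i j" using yi yj y fy by (auto simp: points_iff cp_def le_fun_def fun_eq_iff)
  qed
qed


lemma pp_eq_iff: "pp a b = pp c d \<longleftrightarrow> ((a = c \<and> b = d) \<or> (a = d \<and> b = c))"
proof
  assume h: "pp a b = pp c d"
  have "pp a b a = pp c d a" "pp a b b = pp c d b" "pp a b c = pp c d c" "pp a b d = pp c d d"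
    using h by simp_all
  thus "(a = c \<and> b = d) \<or> (a = d \<and> b = c)" unfolding pp_def by auto
next
  assume "(a = c \<and> b = d) \<or> (a = d \<and> b = c)"
  thus "pp a b = pp c d"
  proof
    assume "a = c \<and> b = d" thus ?thesis by simp
  next
    assume "a = d \<and> b = c" thus ?thesis using pp_sym[of a b] by simp
  qed
qed

lemma n_eq4:
  assumes "{..<n} \<subseteq> {a, b, c, d}" "a < n" "b < n" "c < n" "d < n" "distinct [a, b, c, d]"
  shows "n = (4::nat)"
proof -
  have "{..<n} = {a, b, c, d}" using assms by auto
  hence "card {..<n} = card {a, b, c, d}" by simp
  thus ?thesis using assms(6) by simp
qed

lemma card_small:
  assumes x: "x \<in> points {..<(4::nat)}" and c: "card {k. x k} \<le> 1"
  shows "\<exists>a<4. \<forall>k. x k \<longrightarrow> k = a"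
proof -
  have sub: "{k. x k} \<subseteq> {..<4}" using x by (auto simp: points_iff)
  hence fin: "finite {k. x k}" using finite_subset by blast
  show ?thesis
  proof (cases "{k. x k} = {}")
    case True thus ?thesis by (intro exI[of _ 0]) auto
  next
    case False
    hence "card {k. x k} = 1" using c fin by (simp add: card_gt_0_iff le_antisym Suc_leI)
    then obtain a where a: "{k. x k} = {a}" using card_1_singletonE by blast
    hence "a < 4" using sub by auto
    thus ?thesis using a by auto
  qed
qed

lemma card_big:
  assumes x: "x \<in> points {..<(4::nat)}" and c: "card {k. x k} \<ge> 3"
  shows "\<exists>d<4. \<forall>k<4. k \<noteq> d \<longrightarrow> x k"
proof (cases "\<forall>k<4. x k")
  case True thus ?thesis by (intro exI[of _ 0]) auto
next
  case False
  then obtain d where d: "d < 4" "\<not> x d" by auto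
  have sub: "{k. x k} \<subseteq> {..<4} - {d}" using x d by (auto simp: points_iff)
  have "card ({..<4::nat} - {d}) = 3" using d by simp
  hence "{k. x k} = {..<4} - {d}" using card_seteq[OF _ sub] c by simp
  thus ?thesis using d by auto
qed

lemma card_two:
  assumes x: "x \<in> points {..<(4::nat)}" and c: "card {k. x k} = 2"
  shows "\<exists>a b. a < 4 \<and> b < 4 \<and> a \<noteq> b \<and> x = pp a b"
proof -
  from card_2_iff[THEN iffD1, OF c] obtain a b where ab: "{k. x k} = {a, b}" "a \<noteq> b"
    by (elim exE conjE) (rule that)
  have sub: "{k. x k} \<subseteq> {..<4}" using x by (auto simp: points_iff)
  have "\<forall>k. x k = (k = a \<or> k = b)"
  proof
    fix k
    have "x k \<longleftrightarrow> k \<in> {k. x k}" by simp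
    also have "\<dots> \<longleftrightarrow> k \<in> {a, b}" by (simp only: ab)
    finally show "x k = (k = a \<or> k = b)" by simp
  qed
  hence xe: "x = pp a b" unfolding pp_def by (intro ext) simp
  have "a \<in> {k. x k}" "b \<in> {k. x k}" unfolding ab by simp_all
  hence "a < 4" "b < 4" using sub by auto
  thus ?thesis using ab(2) xe by (intro exI[of _ a] exI[of _ b]) simp
qed

lemma n4:
  assumes pos: "positive_on {..<4} f" and fe: "\<forall>i<4. \<not> f (ee i)" and fce: "\<forall>i<4. f (ce 4 i)"
    and B: "\<forall>i<4. \<exists>j<4. j \<noteq> i \<and> f (pp i j)" and C: "\<forall>i<4. \<exists>j<4. j \<noteq> i \<and> \<not> f (cp 4 i j)"
    and NG: "\<forall>a<4. \<forall>b<4. a \<noteq> b \<longrightarrow> f (pp a b) \<longrightarrow> f (cp 4 a b)"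
  shows "card (extremal_points {..<4} f) = 6"
proof -
  let ?W = "{x. \<exists>a b. a < 4 \<and> b < 4 \<and> a \<noteq> b \<and> x = pp a b}"
  have sub1: "extremal_points {..<4} f \<subseteq> ?W"
  proof
    fix x assume xe: "x \<in> extremal_points {..<4} f"
    hence xp: "x \<in> points {..<4}" by (auto simp: extremal_points_def min_one_def max_zero_def)
    have "card {k. x k} \<le> 1 \<or> card {k. x k} = 2 \<or> card {k. x k} \<ge> 3" by arith
    moreover
    { assume c: "card {k. x k} \<le> 1"
      obtain a where a: "a < 4" "\<forall>k. x k \<longrightarrow> k = a" using card_small[OF xp c] by blast
      have xa: "x \<le> ee a" using a by (auto simp: le_fun_def ee_def)
      have ea: "ee a \<in> points {..<4}" using a by (auto simp: points_iff ee_def)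
      have False
      proof (cases "min_one {..<4} f x")
        case True
        hence "f x" by (simp add: min_one_def)
        hence "f (ee a)" using posD[OF pos xp ea xa] by simp
        thus False using fe a by simp
      next
        case False
        hence mz: "max_zero {..<4} f x" using xe by (simp add: extremal_points_def)
        obtain k where k: "k < 4" "k \<noteq> a" "\<not> f (cp 4 a k)" using C a by blast
        have npk: "\<not> f (pp a k)" using NG[rule_format, OF a(1) k(1) not_sym[OF k(2)]] k(3) by blast
        have pkp: "pp a k \<in> points {..<4}" using a k by (auto simp: points_iff pp_def)
        have le: "x \<le> pp a k" using a by (auto simp: le_fun_def pp_def)
        have mza: "\<forall>y\<in>points {..<4}. \<not> f y \<and> x \<le> y \<longrightarrow> y = x" using mz by (simp add: max_zero_def)
        have e: "pp a k = x" using bspec[OF mza pkp] npk le by simp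
        have "pp a k k" by (simp add: pp_def)
        hence "x k" by (simp only: e)
        thus False using a k by simp
      qed }
    moreover
    { assume c: "card {k. x k} \<ge> 3"
      obtain d where d: "d < 4" "\<forall>k<4. k \<noteq> d \<longrightarrow> x k" using card_big[OF xp c] by blast
      have False
      proof (cases "min_one {..<4} f x")
        case True
        hence fx: "f x" and mo: "\<forall>y\<in>points {..<4}. f y \<and> y \<le> x \<longrightarrow> y = x" by (simp_all add: min_one_def)
        define v where "v = (if d = 0 then 1 else (0::nat))"
        have v: "v < 4" "v \<noteq> d" by (auto simp: v_def)
        obtain w where w: "w < 4" "w \<noteq> v" "f (pp v w)" using B v by blast
        show False
        proof (cases "w = d")
          case False
          have le: "pp v w \<le> x" using d v w False by (auto simp: le_fun_def pp_def)
          have pp: "pp v w \<in> points {..<4}" using v w by (auto simp: points_iff pp_def)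
          have "pp v w = x" using bspec[OF mo pp] le w(3) by simp
          hence "{k. x k} = {v, w}" by (auto simp: pp_def)
          hence "card {k. x k} \<le> 2" by (simp add: card_insert_le_m1)
          thus False using c by simp
        next
          case True
          have "f (pp v d)" using w(3) True by simp
          hence fc: "f (cp 4 v d)" using NG[rule_format, OF v(1) d(1) v(2)] by simp
          have le: "cp 4 v d \<le> x" using d by (auto simp: le_fun_def cp_def)
          have cpp: "cp 4 v d \<in> points {..<4}" by (auto simp: points_iff cp_def)
          have "cp 4 v d = x" using bspec[OF mo cpp] le fc by simp
          hence "cp 4 v d v = x v" by simp
          thus False using d v by (simp add: cp_def)
        qed
      next
        case False
        hence mz: "max_zero {..<4} f x" using xe by (simp add: extremal_points_def)
        have le: "ce 4 d \<le> x" using d by (auto simp: le_fun_def ce_def)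
        have cep: "ce 4 d \<in> points {..<4}" by (auto simp: points_iff ce_def)
        have "f x" using posD[OF pos cep xp le] fce d by simp
        thus False using mz by (simp add: max_zero_def)
      qed }
    moreover
    { assume c: "card {k. x k} = 2"
      obtain a b where "a < 4" "b < 4" "a \<noteq> b" "x = pp a b" using card_two[OF xp c] by (elim exE conjE) (rule that, assumption+)
      hence "x \<in> ?W" by (intro CollectI exI[of _ a] exI[of _ b]) simp }
    ultimately show "x \<in> ?W" by blast
  qed
  have sub2: "?W \<subseteq> extremal_points {..<4} f"
  proof
    fix x assume "x \<in> ?W"
    then obtain a b where ab: "a < 4" "b < 4" "a \<noteq> b" and xd: "x = pp a b"
      unfolding mem_Collect_eq by (elim exE conjE) (rule that, assumption+)
    show "x \<in> extremal_points {..<4} f"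
    proof (cases "f (pp a b)")
      case True
      thus ?thesis using min_one_pair[OF pos fe ab True] xd by (simp add: extremal_points_def)
    next
      case False
      have "max_zero {..<4} f (pp a b)"
        unfolding max_zero_def
      proof (intro conjI ballI impI)
        show "pp a b \<in> points {..<4}" using ab by (auto simp: points_iff pp_def)
        show "\<not> f (pp a b)" by fact
        fix y assume yp: "y \<in> points {..<4}" and hy: "\<not> f y \<and> pp a b \<le> y"
        show "y = pp a b"
        proof (rule ccontr)
          assume ne: "y \<noteq> pp a b"
          have ya: "y a" "y b" using hy by (auto simp: le_fun_def pp_def)
          have "\<exists>c. y c \<and> c \<noteq> a \<and> c \<noteq> b"
          proof (rule ccontr)
            assume "\<not> ?thesis"
            hence "\<forall>k. y k = (k = a \<or> k = b)" using ya by auto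
            hence "y = pp a b" unfolding pp_def by (intro ext) simp
            thus False using ne by simp
          qed
          then obtain c where c: "y c" "c \<noteq> a" "c \<noteq> b" by blast
          have sub: "{k. y k} \<subseteq> {..<4}" using yp by (auto simp: points_iff)
          have "{a, b, c} \<subseteq> {k. y k}" using ya c by auto
          hence "card {a, b, c} \<le> card {k. y k}" using card_mono[OF finite_subset[OF sub]] by blast
          hence "card {k. y k} \<ge> 3" using ab c by simp
          then obtain d where d: "d < 4" "\<forall>k<4. k \<noteq> d \<longrightarrow> y k" using card_big[OF yp] by blast
          have le: "ce 4 d \<le> y" using d by (auto simp: le_fun_def ce_def)
          have cep: "ce 4 d \<in> points {..<4}" by (auto simp: points_iff ce_def)
          have "f y" using posD[OF pos cep yp le] fce d by simp
          thus False using hy by simp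
        qed
      qed
      thus ?thesis using xd by (simp add: extremal_points_def)
    qed
  qed
  have W: "?W = {pp 0 1, pp 0 2, pp 0 3, pp 1 2, pp 1 3, pp 2 3}"
  proof
    show "?W \<subseteq> {pp 0 1, pp 0 2, pp 0 3, pp 1 2, pp 1 3, pp 2 3}"
    proof
      fix x assume "x \<in> ?W"
      then obtain a b where ab: "a < 4" "b < 4" "a \<noteq> b" and xd: "x = pp a b"
        unfolding mem_Collect_eq by (elim exE conjE) (rule that, assumption+)
      have "a = 0 \<or> a = 1 \<or> a = 2 \<or> a = 3" "b = 0 \<or> b = 1 \<or> b = 2 \<or> b = 3" using ab by arith+
      thus "x \<in> {pp 0 1, pp 0 2, pp 0 3, pp 1 2, pp 1 3, pp 2 3}"
        using ab(3) unfolding xd by (auto simp: pp_eq_iff)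
    qed
    have "pp 0 1 \<in> ?W" by (intro CollectI exI[of _ 0] exI[of _ 1]) simp
    moreover have "pp 0 2 \<in> ?W" by (intro CollectI exI[of _ 0] exI[of _ 2]) simp
    moreover have "pp 0 3 \<in> ?W" by (intro CollectI exI[of _ 0] exI[of _ 3]) simp
    moreover have "pp 1 2 \<in> ?W" by (intro CollectI exI[of _ 1] exI[of _ 2]) simp
    moreover have "pp 1 3 \<in> ?W" by (intro CollectI exI[of _ 1] exI[of _ 3]) simp
    moreover have "pp 2 3 \<in> ?W" by (intro CollectI exI[of _ 2] exI[of _ 3]) simp
    ultimately show "{pp 0 1, pp 0 2, pp 0 3, pp 1 2, pp 1 3, pp 2 3} \<subseteq> ?W" by (simp only: insert_subset empty_subsetI)
  qed
  have "extremal_points {..<4} f = ?W" using sub1 sub2 by (rule equalityI)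
  hence "card (extremal_points {..<4} f) = card {pp 0 1, pp 0 2, pp 0 3, pp 1 2, pp 1 3, pp 2 3}"
    using W by simp
  also have "\<dots> = 6" by (simp add: pp_eq_iff)
  finally show ?thesis .
qed


theorem mainTheorem6:
  fixes f :: "(nat \<Rightarrow> bool) \<Rightarrow> bool" and n :: nat
  assumes "n \<ge> 1"
    and "positive_on {..<n} f"
    and "\<not> canalyzing {..<n} f"
    and "\<forall>i<n. canalyzing ({..<n} - {i}) (restr f i False)
                 \<and> canalyzing ({..<n} - {i}) (restr f i True)"
  shows "(\<exists>y. min_one {..<n} f y \<and> hweight {..<n} y = 2
              \<and> max_zero {..<n} f (complement {..<n} y))
         \<or> (n = 4 \<and> card (extremal_points {..<n} f) = 6)"
proof -
  note n = assms(1) and pos = assms(2)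
  note bf = basic_facts[OF assms(1-3)]
  note fe = bf(1) and fce = bf(2) and f0 = bf(3) and f1 = bf(4)
  have B: "\<forall>i<n. \<exists>j<n. j \<noteq> i \<and> f (pp i j)"
    using factB[OF fe fce f1] assms(4) by blast
  have C: "\<forall>i<n. \<exists>j<n. j \<noteq> i \<and> \<not> f (cp n i j)"
    using factC[OF fe fce f0] assms(4) by blast
  show ?thesis
  proof (cases "\<exists>i j. i < n \<and> j < n \<and> i \<noteq> j \<and> f (pp i j) \<and> \<not> f (cp n i j)")
    case True
    then obtain i j where ij: "i < n" "j < n" "i \<noteq> j" "f (pp i j)" "\<not> f (cp n i j)"
      by (elim exE conjE) (rule that, assumption+)
    show ?thesis using good_pair[OF pos fe fce ij] by (intro disjI1 exI[of _ "pp i j"])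
  next
    case False
    hence NG: "\<forall>a<n. \<forall>b<n. a \<noteq> b \<longrightarrow> f (pp a b) \<longrightarrow> f (cp n a b)" by blast
    have P: "\<And>a b c d. a < n \<Longrightarrow> b < n \<Longrightarrow> f (pp a b) \<Longrightarrow> \<not> f (cp n c d) \<Longrightarrow> a = c \<or> a = d \<or> b = c \<or> b = d"
      using factP[OF pos] by blast
    have n0: "0 < n" using n by simp
    obtain j where j: "j < n" "j \<noteq> 0" "f (pp 0 j)" using B n0 by blast
    obtain k where k: "k < n" "k \<noteq> 0" "\<not> f (cp n 0 k)" using C n0 by blast
    have kj: "k \<noteq> j"
    proof
      assume "k = j"
      hence "f (pp 0 k)" using j by simp
      hence "f (cp n 0 k)" using NG[rule_format, OF n0 k(1) not_sym[OF k(2)]] by simp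
      thus False using k by simp
    qed
    obtain l where l: "l < n" "l \<noteq> j" "\<not> f (cp n j l)" using C j by blast
    have l0: "l \<noteq> 0"
    proof
      assume "l = 0"
      hence "\<not> f (cp n 0 j)" using l cp_sym[of n j 0] by simp
      moreover have "f (cp n 0 j)" using NG[rule_format, OF n0 j(1) not_sym[OF j(2)]] j(3) by simp
      ultimately show False by simp
    qed
    have claim1: "\<And>v. v < n \<Longrightarrow> v \<noteq> 0 \<Longrightarrow> v \<noteq> j \<Longrightarrow> v \<noteq> k \<Longrightarrow> v \<noteq> l \<Longrightarrow> k = l \<and> f (pp v k)"
    proof -
      fix v assume v: "v < n" "v \<noteq> 0" "v \<noteq> j" "v \<noteq> k" "v \<noteq> l"
      obtain w where w: "w < n" "w \<noteq> v" "f (pp v w)" using B v(1) by blast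
      have "w = 0 \<or> w = k" using P[OF v(1) w(1) w(3) k(3)] v by blast
      moreover have "w = j \<or> w = l" using P[OF v(1) w(1) w(3) l(3)] v by blast
      ultimately have "w = k" "w = l" using j(2) l0 kj by auto
      thus "k = l \<and> f (pp v k)" using w(3) by simp
    qed
    have "n = 4"
    proof (cases "k = l")
      case False
      have "{..<n} \<subseteq> {0, j, k, l}"
      proof
        fix v assume "v \<in> {..<n}"
        thus "v \<in> {0, j, k, l}" using claim1[of v] False by auto
      qed
      thus "n = 4" using n_eq4[of n 0 j k l] n0 j k l l0 kj False by auto
    next
      case True
      have ex: "\<exists>v<n. v \<noteq> 0 \<and> v \<noteq> j \<and> v \<noteq> k"
      proof (rule ccontr)
        assume none: "\<not> ?thesis"
        obtain w where w: "w < n" "w \<noteq> k" "f (pp k w)" using B k(1) by blast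
        have "w = 0 \<or> w = j" using none w by blast
        thus False
        proof
          assume "w = 0"
          hence "f (pp 0 k)" using w(3) pp_sym[of k 0] by simp
          hence "f (cp n 0 k)" using NG[rule_format, OF n0 k(1) not_sym[OF k(2)]] by simp
          thus False using k by simp
        next
          assume "w = j"
          hence "f (pp j k)" using w(3) pp_sym[of k j] by simp
          hence "f (cp n j k)" using NG[rule_format, OF j(1) k(1) not_sym[OF kj]] by simp
          thus False using l True by simp
        qed
      qed
      then obtain v where v: "v < n" "v \<noteq> 0" "v \<noteq> j" "v \<noteq> k" by blast
      obtain u where u: "u < n" "u \<noteq> v" "\<not> f (cp n v u)" using C v(1) by blast
      have u0j: "u = 0 \<or> u = j" using P[OF n0 j(1) j(3) u(3)] v by blast
      have uniq: "\<And>v'. v' < n \<Longrightarrow> v' \<noteq> 0 \<Longrightarrow> v' \<noteq> j \<Longrightarrow> v' \<noteq> k \<Longrightarrow> v' = v"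
      proof -
        fix v' assume v': "v' < n" "v' \<noteq> 0" "v' \<noteq> j" "v' \<noteq> k"
        have "f (pp v' k)" using claim1[OF v' v'(4)[unfolded True]] by (rule conjunct2)
        from P[OF v'(1) k(1) this u(3)] show "v' = v" using u0j v' v k(2) kj by auto
      qed
      have "{..<n} \<subseteq> {0, j, k, v}"
      proof
        fix x assume "x \<in> {..<n}"
        thus "x \<in> {0, j, k, v}" using uniq[of x] by auto
      qed
      thus "n = 4" using n_eq4[of n 0 j k v] n0 j k v kj by auto
    qed
    have "card (extremal_points {..<n} f) = 6"
      using n4[of f] pos fe fce B C NG unfolding \<open>n = 4\<close> by blast
    thus ?thesis using \<open>n = 4\<close> by simp
  qed
qed

end
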